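(* Let $X\subset[0,1]$. Then $$\overline{\dim}_{GB}(X)=\limsup_{m\to\infty}\frac{\log g_m(X)}{\log m},$$ where $g_m(X)=\sum_{k=1}^{m}\min\Big\{m,\ \#\big(X\cap[\tfrac{k-1}{m},\tfrac{k}{m}]\big)\Big\}$.
   Context: For $\delta>0$ and $F\subset\mathbb{R}^d$, $N_\delta(F)$ denotes the number of cubes of the standard $\delta$-grid $\{\prod_{i=1}^d[n_i\delta,(n_i+1)\delta]: n_i\in\mathbb{Z}\}$ that intersect $F$, and the upper box dimension is $\overline{\dim}_B(F)=\limsup_{\delta\to0}\frac{\log N_\delta(F)}{-\log\delta}$. $C_u(X)$ denotes the set of uniformly continuous real functions on $X$, and for $f\in C_u(X)$, $\mathrm{graph}(f)=\{(x,f(x)):x\in X\}$. The upper graph box dimension of $X$ is $\overline{\dim}_{GB}(X)=\sup_{f\in C_u(X)}\overline{\dim}_B(\mathrm{graph}(f))$. $\#A$ denotes the cardinality of $A$ (possibly infinite; $\min\{m,\infty\}=m$). *)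

theory Defs
  imports "HOL-Analysis.Analysis" "HOL-Library.Extended_Real"
begin

definition ecard :: "'a set \<Rightarrow> ereal" where
  "ecard A = (if finite A then ereal (real (card A)) else \<infinity>)"

definition eln :: "ereal \<Rightarrow> ereal" where
  "eln x = (if x \<le> 0 then -\<infinity> else if x = \<infinity> then \<infinity> else ereal (ln (real_of_ereal x)))"

definition grid_count :: "real \<Rightarrow> (real \<times> real) set \<Rightarrow> ereal" where
  "grid_count \<delta> F = ecard {(n1::int, n2::int).
      ({of_int n1 * \<delta> .. (of_int n1 + 1) * \<delta>} \<times> {of_int n2 * \<delta> .. (of_int n2 + 1) * \<delta>}) \<inter> F \<noteq> {}}"

definition upper_box_dim :: "(real \<times> real) set \<Rightarrow> ereal" where
  "upper_box_dim F = Limsup (at_right 0) (\<lambda>\<delta>. eln (grid_count \<delta> F) / ereal (- ln \<delta>))"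

definition graph_on :: "real set \<Rightarrow> (real \<Rightarrow> real) \<Rightarrow> (real \<times> real) set" where
  "graph_on X f = {(x, f x) | x. x \<in> X}"

definition upper_graph_box_dim :: "real set \<Rightarrow> ereal" where
  "upper_graph_box_dim X =
     (SUP f \<in> {f. uniformly_continuous_on X f}. upper_box_dim (graph_on X f))"

definition g_count :: "real set \<Rightarrow> nat \<Rightarrow> ereal" where
  "g_count X m = (\<Sum>k = 1..m. min (ereal (real m))
       (ecard (X \<inter> {(real k - 1) / real m .. real k / real m})))"

end

theory Submission
  imports Defs
begin


definition ecm :: "nat \<Rightarrow> 'a set \<Rightarrow> real" where
  "ecm m A = (if finite A then min (real m) (real (card A)) else real m)"

lemma min_ecard: "min (ereal (real m)) (ecard A) = ereal (ecm m A)"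
  by (simp add: ecm_def ecard_def min_def)

definition Ik :: "nat \<Rightarrow> nat \<Rightarrow> real set" where
  "Ik m k = {(real k - 1) / real m .. real k / real m}"

definition gr :: "real set \<Rightarrow> nat \<Rightarrow> real" where
  "gr X m = (\<Sum>k = 1..m. ecm m (X \<inter> Ik m k))"

lemma g_count_gr: "g_count X m = ereal (gr X m)"
  by (simp add: g_count_def gr_def min_ecard Ik_def)

lemma ecm_nonneg: "0 \<le> ecm m A" by (simp add: ecm_def)
lemma ecm_le: "ecm m A \<le> real m" by (simp add: ecm_def)

lemma ecm_mono: assumes "A \<subseteq> B" shows "ecm m A \<le> ecm m B"
proof (cases "finite B")
  case True
  then have "finite A" "card A \<le> card B" using assms finite_subset card_mono by auto
  then show ?thesis using True by (auto simp: ecm_def)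
next
  case False then show ?thesis by (auto simp: ecm_def)
qed

lemma ecm_Un: "ecm m (A \<union> B) \<le> ecm m A + ecm m B"
proof (cases "finite A \<and> finite B")
  case True
  then have "card (A \<union> B) \<le> card A + card B" by (simp add: card_Un_le)
  then show ?thesis using True by (auto simp: ecm_def min_def)
next
  case False
  then show ?thesis by (auto simp: ecm_def)
qed

lemma ecm_pos: "x \<in> A \<Longrightarrow> m \<ge> 1 \<Longrightarrow> 1 \<le> ecm m A"
proof (cases "finite A")
  case True
  assume "x \<in> A" "m \<ge> 1"
  then have "card A \<ge> 1" using True by (metis One_nat_def Suc_leI card_gt_0_iff empty_iff)
  then show ?thesis using True \<open>m\<ge>1\<close> by (simp add: ecm_def)
next
  case False
  assume "m \<ge> 1" then show ?thesis using False by (simp add: ecm_def)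
qed

definition col :: "nat \<Rightarrow> real \<Rightarrow> nat" where
  "col m x = min m (nat \<lfloor>real m * x\<rfloor> + 1)"

lemma col_in_Ik:
  assumes "m \<ge> 1" "x \<in> {0..1}"
  shows "x \<in> Ik m (col m x)" "col m x \<in> {1..m}"
proof -
  have m0: "real m > 0" using assms by simp
  have fl0: "\<lfloor>real m * x\<rfloor> \<ge> 0" using assms by auto
  show "col m x \<in> {1..m}" using assms by (auto simp: col_def)
  show "x \<in> Ik m (col m x)"
  proof (cases "nat \<lfloor>real m * x\<rfloor> + 1 \<le> m")
    case True
    then have c: "col m x = nat \<lfloor>real m * x\<rfloor> + 1" by (simp add: col_def)
    have "real (nat \<lfloor>real m * x\<rfloor>) = of_int \<lfloor>real m * x\<rfloor>" using fl0 by simp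
    moreover have "of_int \<lfloor>real m * x\<rfloor> \<le> real m * x" "real m * x < of_int \<lfloor>real m * x\<rfloor> + 1"
      by linarith+
    ultimately show ?thesis using m0 unfolding c Ik_def
      by (auto simp: field_simps)
  next
    case False
    then have c: "col m x = m" by (simp add: col_def)
    have "\<lfloor>real m * x\<rfloor> \<ge> int m" using False fl0 by linarith
    then have "real m * x \<ge> real m" by linarith
    then have "x = 1" using assms m0 by (auto simp: mult_le_cancel_left1)
    then show ?thesis using m0 unfolding c Ik_def by (auto simp: field_simps)
  qed
qed

lemma col_of_Ik:
  assumes "m \<ge> 1" "k \<ge> 1" "k \<le> m" "x \<in> Ik m k"
  shows "col m x = k \<or> col m x = k + 1"
proof -
  have m0: "real m > 0" using assms by simp
  have "real k - 1 \<le> real m * x" "real m * x \<le> real k"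
    using assms(4) m0 by (auto simp: Ik_def field_simps)
  then have "\<lfloor>real m * x\<rfloor> = int k - 1 \<or> \<lfloor>real m * x\<rfloor> = int k"
    by linarith
  then show ?thesis using assms by (auto simp: col_def)
qed

lemma gr_nonneg: "0 \<le> gr X m" by (simp add: gr_def sum_nonneg ecm_nonneg)

lemma gr_ge1:
  assumes "X \<subseteq> {0..1}" "X \<noteq> {}" "m \<ge> 1"
  shows "1 \<le> gr X m"
proof -
  obtain x where x: "x \<in> X" using assms by auto
  have k: "col m x \<in> {1..m}" "x \<in> Ik m (col m x)" using col_in_Ik assms x by auto
  have "1 \<le> ecm m (X \<inter> Ik m (col m x))" using ecm_pos[of x] k x assms by auto
  also have "\<dots> \<le> gr X m" unfolding gr_def
    by (rule member_le_sum) (use k ecm_nonneg in auto)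
  finally show ?thesis .
qed



definition sqset :: "real \<Rightarrow> (real \<times> real) set \<Rightarrow> (int \<times> int) set" where
  "sqset \<delta> F = {(n1::int, n2::int).
      ({of_int n1 * \<delta> .. (of_int n1 + 1) * \<delta>} \<times> {of_int n2 * \<delta> .. (of_int n2 + 1) * \<delta>}) \<inter> F \<noteq> {}}"

lemma grid_count_sqset: "grid_count \<delta> F = ecard (sqset \<delta> F)"
  by (simp add: grid_count_def sqset_def)

lemma int_interval_card:
  fixes a b \<delta> :: real
  assumes "\<delta> > 0" "a \<le> b"
  shows "finite {n::int. a \<le> (of_int n + 1) * \<delta> \<and> of_int n * \<delta> \<le> b}"
    "real (card {n::int. a \<le> (of_int n + 1) * \<delta> \<and> of_int n * \<delta> \<le> b}) \<le> (b - a) / \<delta> + 2"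
proof -
  let ?S = "{n::int. a \<le> (of_int n + 1) * \<delta> \<and> of_int n * \<delta> \<le> b}"
  have sub: "?S \<subseteq> {\<lceil>a/\<delta>\<rceil> - 1 .. \<lfloor>b/\<delta>\<rfloor>}"
  proof
    fix n assume "n \<in> ?S"
    then have "a / \<delta> \<le> of_int n + 1" "of_int n \<le> b / \<delta>" using assms
      by (auto simp: field_simps)
    then have "\<lceil>a/\<delta>\<rceil> \<le> n + 1" "n \<le> \<lfloor>b/\<delta>\<rfloor>"
      by (simp_all add: ceiling_le_iff le_floor_iff)
    then show "n \<in> {\<lceil>a/\<delta>\<rceil> - 1 .. \<lfloor>b/\<delta>\<rfloor>}" by simp
  qed
  then show "finite ?S" using finite_subset by blast
  have "card ?S \<le> card {\<lceil>a/\<delta>\<rceil> - 1 .. \<lfloor>b/\<delta>\<rfloor>}" using sub by (intro card_mono) auto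
  also have "\<dots> = nat (\<lfloor>b/\<delta>\<rfloor> - \<lceil>a/\<delta>\<rceil> + 2)" by simp
  finally have "real (card ?S) \<le> real (nat (\<lfloor>b/\<delta>\<rfloor> - \<lceil>a/\<delta>\<rceil> + 2))" by simp
  also have "\<dots> \<le> b/\<delta> - a/\<delta> + 2"
  proof -
    have "a/\<delta> \<le> b/\<delta>" using assms by (simp add: divide_right_mono)
    then show ?thesis by (cases "\<lfloor>b/\<delta>\<rfloor> - \<lceil>a/\<delta>\<rceil> + 2 \<ge> 0") (linarith+)
  qed
  also have "\<dots> = (b - a) / \<delta> + 2" by (simp add: diff_divide_distrib)
  finally show "real (card ?S) \<le> (b - a) / \<delta> + 2" .
qed

lemma point_squares:
  assumes "\<delta> > 0"
    "(x, y) \<in> {of_int n1 * \<delta> .. (of_int n1 + 1) * \<delta>} \<times> {of_int n2 * \<delta> .. (of_int n2 + 1) * \<delta>}"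
  shows "(n1, n2) \<in> {\<lfloor>x/\<delta>\<rfloor> - 1, \<lfloor>x/\<delta>\<rfloor>} \<times> {\<lfloor>y/\<delta>\<rfloor> - 1, \<lfloor>y/\<delta>\<rfloor>}"
proof -
  have "of_int n1 \<le> x/\<delta>" "x/\<delta> \<le> of_int n1 + 1" "of_int n2 \<le> y/\<delta>" "y/\<delta> \<le> of_int n2 + 1"
    using assms by (auto simp: field_simps)
  then have "n1 \<le> \<lfloor>x/\<delta>\<rfloor>" "\<lfloor>x/\<delta>\<rfloor> \<le> n1 + 1" "n2 \<le> \<lfloor>y/\<delta>\<rfloor>" "\<lfloor>y/\<delta>\<rfloor> \<le> n2 + 1"
    by (simp_all add: le_floor_iff floor_le_iff)
  then show ?thesis by auto
qed

lemma graph_meet: "S \<inter> graph_on A f \<noteq> {} \<longleftrightarrow> (\<exists>x\<in>A. (x, f x) \<in> S)"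
  by (auto simp: graph_on_def)

lemma sqset_mem: "(n1, n2) \<in> sqset \<delta> (graph_on A f) \<longleftrightarrow>
   (\<exists>x\<in>A. (x, f x) \<in> {of_int n1 * \<delta> .. (of_int n1 + 1) * \<delta>} \<times> {of_int n2 * \<delta> .. (of_int n2 + 1) * \<delta>})"
  unfolding sqset_def using graph_meet by simp

lemma card_two_le: "card {a, b} \<le> 2" by (simp add: card_insert_le_m1)

lemma sqset_graph_card_points:
  assumes "\<delta> > 0" "finite A"
  shows "finite (sqset \<delta> (graph_on A f)) \<and> card (sqset \<delta> (graph_on A f)) \<le> 4 * card A"
proof -
  define Q where "Q x = {\<lfloor>x/\<delta>\<rfloor> - 1, \<lfloor>x/\<delta>\<rfloor>} \<times> {\<lfloor>f x/\<delta>\<rfloor> - 1, \<lfloor>f x/\<delta>\<rfloor>}" for x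
  have sub: "sqset \<delta> (graph_on A f) \<subseteq> (\<Union>x\<in>A. Q x)"
  proof clarify
    fix n1 n2 assume "(n1, n2) \<in> sqset \<delta> (graph_on A f)"
    then obtain x where x: "x \<in> A"
      "(x, f x) \<in> {of_int n1 * \<delta> .. (of_int n1 + 1) * \<delta>} \<times> {of_int n2 * \<delta> .. (of_int n2 + 1) * \<delta>}"
      unfolding sqset_mem by blast
    then have "(n1, n2) \<in> Q x" using point_squares[OF assms(1) x(2)] unfolding Q_def by blast
    then show "(n1, n2) \<in> (\<Union>x\<in>A. Q x)" using x by blast
  qed
  have fQ: "finite (Q x)" for x by (simp add: Q_def)
  have cQ: "card (Q x) \<le> 4" for x
  proof -
    have "card (Q x) = card {\<lfloor>x/\<delta>\<rfloor> - 1, \<lfloor>x/\<delta>\<rfloor>} * card {\<lfloor>f x/\<delta>\<rfloor> - 1, \<lfloor>f x/\<delta>\<rfloor>}"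
      unfolding Q_def by (rule card_cartesian_product)
    also have "\<dots> \<le> 2 * 2" by (intro mult_le_mono card_two_le)
    finally show ?thesis by simp
  qed
  have fin: "finite (\<Union>x\<in>A. Q x)" using assms fQ by blast
  have "card (sqset \<delta> (graph_on A f)) \<le> card (\<Union>x\<in>A. Q x)" by (rule card_mono[OF fin sub])
  also have "\<dots> \<le> (\<Sum>x\<in>A. card (Q x))" by (rule card_UN_le[OF assms(2)])
  also have "\<dots> \<le> (\<Sum>x\<in>A. 4)" by (intro sum_mono cQ)
  finally show ?thesis using finite_subset[OF sub fin] by simp
qed



lemma upper_count:
  assumes X01: "X \<subseteq> {0..1}" and M: "\<forall>x\<in>X. \<bar>f x\<bar> \<le> M" "0 \<le> M"
    and d: "0 < \<delta>" "\<delta> \<le> 1/2"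
  defines "m \<equiv> nat \<lfloor>1/\<delta>\<rfloor>"
  shows "finite (sqset \<delta> (graph_on X f)) \<and>
         real (card (sqset \<delta> (graph_on X f))) \<le> 4*(4*M+2) * gr X m"
proof -
  define D where "D = 4*(4*M+2)"
  have p: "1/\<delta> > 0" using d by simp
  have rm: "real m = of_int \<lfloor>1/\<delta>\<rfloor>" using p by (simp add: m_def)
  have fl: "real m \<le> 1/\<delta>" "1/\<delta> < real m + 1" unfolding rm by linarith+
  have inv2: "1/\<delta> \<ge> 2" using d by (simp add: field_simps)
  have m2: "m \<ge> 2" using fl inv2 by linarith
  have m1: "m \<ge> 1" using m2 by simp
  have md: "real m * \<delta> \<ge> 1/2"
  proof -
    have "(1/\<delta> - 1) * \<delta> < real m * \<delta>" using fl d by (intro mult_strict_right_mono) auto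
    moreover have "(1/\<delta> - 1) * \<delta> = 1 - \<delta>" using d by (simp add: field_simps)
    ultimately show ?thesis using d by linarith
  qed
  define T where "T k = sqset \<delta> (graph_on (X \<inter> Ik m k) f)" for k
  have cover: "sqset \<delta> (graph_on X f) \<subseteq> (\<Union>k\<in>{1..m}. T k)"
  proof clarify
    fix n1 n2 assume "(n1, n2) \<in> sqset \<delta> (graph_on X f)"
    then obtain x where x: "x \<in> X"
      "(x, f x) \<in> {of_int n1 * \<delta> .. (of_int n1 + 1) * \<delta>} \<times> {of_int n2 * \<delta> .. (of_int n2 + 1) * \<delta>}"
      unfolding sqset_mem by blast
    have c: "col m x \<in> {1..m}" "x \<in> Ik m (col m x)" using col_in_Ik[OF m1] x X01 by auto
    have "(n1, n2) \<in> T (col m x)" unfolding T_def sqset_mem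
      by (rule bexI[of _ x]) (use x c in auto)
    then show "(n1, n2) \<in> (\<Union>k\<in>{1..m}. T k)" using c by blast
  qed
  have Tk: "finite (T k) \<and> real (card (T k)) \<le> D * ecm m (X \<inter> Ik m k)" if k: "k \<in> {1..m}" for k
  proof -
    define B where "B = {n::int. (real k - 1) / real m \<le> (of_int n + 1) * \<delta> \<and> of_int n * \<delta> \<le> real k / real m}"
    define R where "R = {n::int. - M \<le> (of_int n + 1) * \<delta> \<and> of_int n * \<delta> \<le> M}"
    have sub: "T k \<subseteq> B \<times> R"
    proof clarify
      fix n1 n2 assume "(n1, n2) \<in> T k"
      then obtain x where x: "x \<in> X \<inter> Ik m k"
        "(x, f x) \<in> {of_int n1 * \<delta> .. (of_int n1 + 1) * \<delta>} \<times> {of_int n2 * \<delta> .. (of_int n2 + 1) * \<delta>}"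
        unfolding T_def sqset_mem by blast
      have "\<bar>f x\<bar> \<le> M" using M x by auto
      then show "n1 \<in> B \<and> n2 \<in> R" using x unfolding B_def R_def Ik_def by auto
    qed
    have le: "(real k - 1) / real m \<le> real k / real m" using m1 by (simp add: divide_right_mono)
    have fB: "finite B" and cB: "real (card B) \<le> (real k / real m - (real k - 1) / real m) / \<delta> + 2"
      unfolding B_def using int_interval_card[OF d(1) le] by auto
    have "(real k / real m - (real k - 1) / real m) / \<delta> = 1 / (real m * \<delta>)"
      using m1 by (simp add: field_simps)
    also have "\<dots> \<le> 2" using md m1 d by (simp add: field_simps)
    finally have cB4: "real (card B) \<le> 4" using cB by simp
    have leM: "-M \<le> M" using M by simp
    have fR: "finite R" and cR: "real (card R) \<le> (M - - M) / \<delta> + 2"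
      unfolding R_def using int_interval_card[OF d(1) leM] by auto
    have "(M - - M) / \<delta> = 2 * M * (1/\<delta>)" by simp
    also have "\<dots> \<le> 2 * M * (real m + 1)" using fl M by (intro mult_left_mono) auto
    finally have "real (card R) \<le> 2 * M * (real m + 1) + 2" using cR by simp
    also have "\<dots> \<le> (4*M+2) * real m"
    proof -
      have "M * 1 \<le> M * real m" using M m1 by (intro mult_left_mono) auto
      then show ?thesis using m1 by (simp add: algebra_simps)
    qed
    finally have cR': "real (card R) \<le> (4*M+2) * real m" .
    have fT: "finite (T k)" using finite_subset[OF sub] fB fR by blast
    have "card (T k) \<le> card (B \<times> R)" using sub fB fR by (intro card_mono) auto
    also have "\<dots> = card B * card R" by (rule card_cartesian_product)
    finally have "real (card (T k)) \<le> real (card B) * real (card R)" by (metis of_nat_le_iff of_nat_mult)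
    also have "\<dots> \<le> 4 * ((4*M+2) * real m)" using cB4 cR' by (intro mult_mono) auto
    finally have c1: "real (card (T k)) \<le> D * real m" unfolding D_def by (simp add: algebra_simps)
    show ?thesis
    proof (cases "finite (X \<inter> Ik m k) \<and> card (X \<inter> Ik m k) \<le> m")
      case True
      then have e: "ecm m (X \<inter> Ik m k) = real (card (X \<inter> Ik m k))" by (simp add: ecm_def)
      have "card (T k) \<le> 4 * card (X \<inter> Ik m k)" unfolding T_def
        using sqset_graph_card_points[OF d(1)] True by blast
      then have "real (card (T k)) \<le> 4 * real (card (X \<inter> Ik m k))" by simp
      also have "\<dots> \<le> D * real (card (X \<inter> Ik m k))" unfolding D_def using M by (intro mult_right_mono) auto
      finally show ?thesis using fT e by simp
    next
      case False
      then have "ecm m (X \<inter> Ik m k) = real m" by (auto simp: ecm_def)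
      then show ?thesis using fT c1 by simp
    qed
  qed
  have fU: "finite (\<Union>k\<in>{1..m}. T k)" using Tk by auto
  have fin: "finite (sqset \<delta> (graph_on X f))" using finite_subset[OF cover fU] .
  have "card (sqset \<delta> (graph_on X f)) \<le> card (\<Union>k\<in>{1..m}. T k)" by (rule card_mono[OF fU cover])
  also have "\<dots> \<le> (\<Sum>k\<in>{1..m}. card (T k))" by (rule card_UN_le) simp
  finally have "real (card (sqset \<delta> (graph_on X f))) \<le> (\<Sum>k\<in>{1..m}. real (card (T k)))"
    by (metis of_nat_le_iff of_nat_sum)
  also have "\<dots> \<le> (\<Sum>k\<in>{1..m}. D * ecm m (X \<inter> Ik m k))" by (intro sum_mono) (use Tk in auto)
  also have "\<dots> = D * gr X m" by (simp add: gr_def sum_distrib_left)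
  finally show ?thesis using fin unfolding D_def by simp
qed



lemma eln_pos: "x > 0 \<Longrightarrow> eln (ereal x) = ereal (ln x)" by (simp add: eln_def)
lemma eln_zero: "eln (ereal 0) = -\<infinity>" by (simp add: eln_def)

lemma ratio_pos: "x > 0 \<Longrightarrow> c > 0 \<Longrightarrow> eln (ereal x) / ereal c = ereal (ln x / c)"
  by (simp add: eln_pos)

lemma ratio_zero: "c > 0 \<Longrightarrow> eln (ereal 0) / ereal c = -\<infinity>"
  by (simp add: eln_zero)

lemma L_nonneg:
  assumes "X \<subseteq> {0..1}" "X \<noteq> {}"
  shows "0 \<le> Limsup sequentially (\<lambda>m. eln (g_count X m) / ereal (ln (real m)))"
proof (rule le_Limsup)
  show "sequentially \<noteq> bot" by simp
  show "\<forall>\<^sub>F m in sequentially. 0 \<le> eln (g_count X m) / ereal (ln (real m))"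
    unfolding eventually_sequentially
  proof (intro exI[of _ 2] allI impI)
    fix m :: nat assume m: "2 \<le> m"
    have g: "1 \<le> gr X m" using gr_ge1[OF assms] m by simp
    have lm: "ln (real m) > 0" using m by simp
    show "0 \<le> eln (g_count X m) / ereal (ln (real m))"
      unfolding g_count_gr using g lm by (simp add: ratio_pos)
  qed
qed

lemma upper_dim:
  assumes X01: "X \<subseteq> {0..1}" and ne: "X \<noteq> {}" and uc: "uniformly_continuous_on X f"
  shows "upper_box_dim (graph_on X f) \<le> Limsup sequentially (\<lambda>m. eln (g_count X m) / ereal (ln (real m)))"
    (is "_ \<le> ?L")
proof -
  have L0: "0 \<le> ?L" by (rule L_nonneg[OF X01 ne])
  have "bounded (f ` X)"
    using bounded_uniformly_continuous_image[OF uc] bounded_subset[OF bounded_closed_interval X01] by blast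
  then obtain M0 where M0: "\<forall>y\<in>f ` X. norm y \<le> M0" unfolding bounded_iff by blast
  define M where "M = max M0 0"
  have M: "\<forall>x\<in>X. \<bar>f x\<bar> \<le> M" "0 \<le> M" using M0 unfolding M_def by auto
  define D where "D = 4*(4*M+2)"
  have D1: "D \<ge> 1" using M unfolding D_def by simp
  show ?thesis
  proof (cases "?L = \<infinity>")
    case True then show ?thesis by simp
  next
    case False
    show ?thesis unfolding upper_box_dim_def Limsup_le_iff
    proof (intro allI impI)
      fix y assume y: "?L < y"
      obtain s where s: "?L < ereal s" "ereal s < y" using ereal_dense2[OF y] by blast
      obtain t where t: "ereal s < ereal t" "ereal t < y" using ereal_dense2[OF s(2)] by blast
      have "0 < ereal s" using L0 s(1) by (rule order.strict_trans1)
      then have s0: "s > 0" by simp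
      have st: "s < t" using t by simp
      have "eventually (\<lambda>m. eln (g_count X m) / ereal (ln (real m)) < ereal s) sequentially"
        using Limsup_lessD[OF s(1)] .
      then obtain m0 where m0: "\<And>m. m \<ge> m0 \<Longrightarrow> eln (g_count X m) / ereal (ln (real m)) < ereal s"
        unfolding eventually_sequentially by blast
      have gbound: "gr X m \<le> real m powr s" if "m \<ge> m0" "m \<ge> 2" for m
      proof -
        have g: "1 \<le> gr X m" using gr_ge1[OF X01 ne] that by simp
        have lm: "ln (real m) > 0" using that by simp
        have "ln (gr X m) / ln (real m) < s" using m0[OF that(1)] unfolding g_count_gr
          using g lm by (simp add: ratio_pos)
        then have "ln (gr X m) < s * ln (real m)" using lm by (simp add: divide_less_eq)
        then have "gr X m < exp (s * ln (real m))" using g by (metis exp_less_cancel_iff exp_ln_iff less_le_trans zero_less_one)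
        then show ?thesis using that by (simp add: powr_def)
      qed
      define b where "b = min (1 / (real m0 + 2)) (exp (- (ln D / (t - s))))"
      have b0: "b > 0" unfolding b_def by simp
      show "\<forall>\<^sub>F \<delta> in at_right 0. eln (grid_count \<delta> (graph_on X f)) / ereal (- ln \<delta>) < y"
        unfolding eventually_at_right_field
      proof (intro exI[of _ b] conjI allI impI b0)
        fix \<delta> :: real assume d0: "0 < \<delta>" and db: "\<delta> < b"
        have db1: "\<delta> < 1 / (real m0 + 2)" and db2: "\<delta> < exp (- (ln D / (t - s)))"
          using db unfolding b_def by auto
        have "1 / (real m0 + 2) \<le> 1/2" by (simp add: field_simps)
        then have dh: "\<delta> \<le> 1/2" using db1 by linarith
        define m where "m = nat \<lfloor>1/\<delta>\<rfloor>"
        have p: "1/\<delta> > 0" using d0 by simp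
        have rm: "real m = of_int \<lfloor>1/\<delta>\<rfloor>" using p by (simp add: m_def)
        have fl: "real m \<le> 1/\<delta>" "1/\<delta> < real m + 1" unfolding rm by linarith+
        have "real m0 + 2 < 1/\<delta>" using db1 d0 by (simp add: field_simps)
        then have mm: "m \<ge> m0" "m \<ge> 2" using fl by linarith+
        have lm: "ln (real m) > 0" using mm by simp
        have lmd: "ln (real m) \<le> ln (1/\<delta>)" using fl mm by (intro ln_mono) auto
        have nld: "- ln \<delta> = ln (1/\<delta>)" using d0 by (simp add: ln_div)
        have ld: "ln (1/\<delta>) > 0" using lm lmd by linarith
        have ld2: "ln D / (t - s) < ln (1/\<delta>)"
        proof -
          have "ln \<delta> < - (ln D / (t - s))" using db2 d0 by (metis ln_exp ln_less_cancel_iff exp_gt_zero)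
          then show ?thesis using nld by linarith
        qed
        have lDle: "ln D / ln (1/\<delta>) \<le> t - s"
        proof -
          have "ln D \<le> (t - s) * ln (1/\<delta>)" using ld2 st by (simp add: divide_less_eq less_imp_le mult.commute)
          then show ?thesis using ld by (simp add: divide_le_eq mult.commute)
        qed
        note cnt = upper_count[OF X01 M d0 dh, folded m_def D_def]
        define N where "N = card (sqset \<delta> (graph_on X f))"
        have gc: "grid_count \<delta> (graph_on X f) = ereal (real N)"
          using cnt unfolding grid_count_sqset ecard_def N_def by simp
        have NB: "real N \<le> D * real m powr s"
        proof -
          have "real N \<le> D * gr X m" using cnt unfolding N_def by simp
          also have "\<dots> \<le> D * real m powr s" using gbound[OF mm] D1 by (intro mult_left_mono) auto
          finally show ?thesis .
        qed
        show "eln (grid_count \<delta> (graph_on X f)) / ereal (- ln \<delta>) < y"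
        proof (cases "N = 0")
          case True
          then show ?thesis unfolding gc using ld nld y L0 by (auto simp: ratio_zero)
        next
          case False
          then have N1: "real N \<ge> 1" by simp
          have "ln (real N) \<le> ln (D * real m powr s)" using NB N1 by (intro ln_mono) auto
          also have "\<dots> = ln D + s * ln (real m)" using D1 mm by (simp add: ln_mult ln_powr)
          finally have lnN: "ln (real N) \<le> ln D + s * ln (real m)" .
          have "ln (real N) / ln (1/\<delta>) \<le> (ln D + s * ln (real m)) / ln (1/\<delta>)"
            using lnN ld by (simp add: divide_right_mono)
          also have "\<dots> = ln D / ln (1/\<delta>) + s * (ln (real m) / ln (1/\<delta>))" by (simp add: add_divide_distrib)
          also have "\<dots> \<le> (t - s) + s * 1"
          proof -
            have "ln (real m) / ln (1/\<delta>) \<le> 1" using lmd ld by simp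
            then have "s * (ln (real m) / ln (1/\<delta>)) \<le> s * 1" using s0 by (intro mult_left_mono) auto
            then show ?thesis using lDle by linarith
          qed
          finally have "ln (real N) / ln (1/\<delta>) \<le> t" by simp
          then have "eln (grid_count \<delta> (graph_on X f)) / ereal (- ln \<delta>) \<le> ereal t"
            unfolding gc nld using N1 ld by (simp add: ratio_pos)
          then show ?thesis using t by simp
        qed
      qed
    qed
  qed
qed



lemma interp:
  fixes P :: "real set" and v :: "real \<Rightarrow> real"
  assumes "finite P" "\<forall>p\<in>P. 0 \<le> v p \<and> v p \<le> 1"
  shows "\<exists>h. continuous_on UNIV h \<and> (\<forall>x. 0 \<le> h x \<and> h x \<le> 1) \<and> (\<forall>p\<in>P. h p = v p)"
  using assms
proof (induction P rule: finite_induct)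
  case empty
  show ?case by (intro exI[of _ "\<lambda>_. 0"]) auto
next
  case (insert p P)
  then obtain h where h: "continuous_on UNIV h" "\<forall>x. 0 \<le> h x \<and> h x \<le> 1" "\<forall>q\<in>P. h q = v q" by auto
  define r where "r = Min (insert 1 ((\<lambda>q. \<bar>q - p\<bar>) ` P))"
  have r0: "r > 0" unfolding r_def using insert(1,2) by (subst Min_gr_iff) auto
  have rq: "r \<le> \<bar>q - p\<bar>" if "q \<in> P" for q unfolding r_def using insert(1) that by (intro Min_le) auto
  define \<phi> where "\<phi> x = max 0 (1 - \<bar>x - p\<bar> / r)" for x
  have \<phi>c: "continuous_on UNIV \<phi>" unfolding \<phi>_def by (intro continuous_intros) (use r0 in auto)
  have \<phi>r: "0 \<le> \<phi> x \<and> \<phi> x \<le> 1" for x unfolding \<phi>_def using r0 by auto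
  have \<phi>p: "\<phi> p = 1" unfolding \<phi>_def by simp
  have \<phi>q: "\<phi> q = 0" if "q \<in> P" for q
  proof -
    have "1 \<le> \<bar>q - p\<bar> / r" using rq[OF that] r0 by simp
    then show ?thesis unfolding \<phi>_def by simp
  qed
  define h' where "h' x = (1 - \<phi> x) * h x + \<phi> x * v p" for x
  have vp: "0 \<le> v p \<and> v p \<le> 1" using insert by auto
  have "continuous_on UNIV h'" unfolding h'_def by (intro continuous_intros \<phi>c h(1))
  moreover have "0 \<le> h' x \<and> h' x \<le> 1" for x
  proof -
    have a: "0 \<le> \<phi> x" "\<phi> x \<le> 1" "0 \<le> h x" "h x \<le> 1" using \<phi>r h(2) by auto
    have "(1 - \<phi> x) * h x \<le> (1 - \<phi> x) * 1" using a by (intro mult_left_mono) auto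
    moreover have "\<phi> x * v p \<le> \<phi> x * 1" using a vp by (intro mult_left_mono) auto
    ultimately show ?thesis unfolding h'_def using a vp by (auto intro!: add_nonneg_nonneg mult_nonneg_nonneg)
  qed
  moreover have "\<forall>q\<in>insert p P. h' q = v q"
    using \<phi>p \<phi>q h(3) unfolding h'_def by auto
  ultimately show ?case by blast
qed



locale lowc =
  fixes X :: "real set" and s \<epsilon> :: real
  assumes X01: "X \<subseteq> {0..1}" and eps: "\<epsilon> > 0"
    and freq: "\<forall>n. \<exists>m\<ge>n. m \<ge> 2 \<and> real m powr s \<le> gr X m"
begin

definition Ck :: "nat \<Rightarrow> nat \<Rightarrow> real set" where "Ck m k = {x\<in>X. col m x = k}"
definition Rn :: "real \<Rightarrow> nat \<Rightarrow> nat" where "Rn a m = nat \<lfloor>a * real m / 6\<rfloor>"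
definition Psel :: "real \<Rightarrow> nat \<Rightarrow> nat \<Rightarrow> real set" where
  "Psel a m k = (if finite (Ck m k) \<and> card (Ck m k) \<le> Rn a m then Ck m k
      else (SOME B. B \<subseteq> Ck m k \<and> finite B \<and> card B = Rn a m))"
definition Pall :: "real \<Rightarrow> nat \<Rightarrow> real set" where "Pall a m = (\<Union>k\<in>{1..m}. Psel a m k)"
definition rank :: "real \<Rightarrow> nat \<Rightarrow> real \<Rightarrow> nat" where
  "rank a m p = card {q\<in>Pall a m. col m q = col m p \<and> q \<le> p}"
definition target :: "(real \<Rightarrow> real) \<Rightarrow> real \<Rightarrow> nat \<Rightarrow> real \<Rightarrow> real" where
  "target F a m p = F ((real (col m p) - 1) / real m) + a/4 + 3 / real m * real (rank a m p)"
definition vv :: "(real \<Rightarrow> real) \<Rightarrow> real \<Rightarrow> nat \<Rightarrow> real \<Rightarrow> real" where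
  "vv F a m p = (target F a m p - F p) / a"

definition goodm :: "(real \<Rightarrow> real) \<Rightarrow> real \<Rightarrow> nat \<Rightarrow> bool" where
  "goodm F b m \<longleftrightarrow> m \<ge> 2 \<and> 1/b < real m \<and> 12 \<le> (b/2) * real m \<and> 48/b \<le> real m powr \<epsilon>
     \<and> real m powr s \<le> gr X m
     \<and> (\<forall>x\<in>{0..1}. \<forall>y\<in>{0..1}. \<bar>x - y\<bar> \<le> 1 / real m \<longrightarrow> \<bar>F x - F y\<bar> \<le> b/8)"

lemma Psel_props:
  "Psel a m k \<subseteq> Ck m k \<and> finite (Psel a m k) \<and> card (Psel a m k) \<le> Rn a m \<and>
   (\<not> (finite (Ck m k) \<and> card (Ck m k) \<le> Rn a m) \<longrightarrow> card (Psel a m k) = Rn a m)"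
proof (cases "finite (Ck m k) \<and> card (Ck m k) \<le> Rn a m")
  case True
  then show ?thesis by (simp add: Psel_def)
next
  case False
  have "\<exists>B. B \<subseteq> Ck m k \<and> finite B \<and> card B = Rn a m"
  proof (cases "finite (Ck m k)")
    case True
    then have "Rn a m \<le> card (Ck m k)" using False by simp
    then obtain B where "B \<subseteq> Ck m k" "card B = Rn a m" using obtain_subset_with_card_n by metis
    then show ?thesis using True finite_subset by blast
  next
    case False
    then show ?thesis using infinite_arbitrarily_large by blast
  qed
  then have "(SOME B. B \<subseteq> Ck m k \<and> finite B \<and> card B = Rn a m) \<subseteq> Ck m k \<and>
      finite (SOME B. B \<subseteq> Ck m k \<and> finite B \<and> card B = Rn a m) \<and>
      card (SOME B. B \<subseteq> Ck m k \<and> finite B \<and> card B = Rn a m) = Rn a m"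
    by (rule someI_ex)
  moreover have "Psel a m k = (SOME B. B \<subseteq> Ck m k \<and> finite B \<and> card B = Rn a m)"
    unfolding Psel_def by (rule if_not_P[OF False])
  ultimately show ?thesis using False by simp
qed

lemma Pall_mem:
  assumes "p \<in> Pall a m"
  shows "p \<in> X" "col m p \<in> {1..m}" "p \<in> Psel a m (col m p)"
proof -
  obtain k where k: "k \<in> {1..m}" "p \<in> Psel a m k" using assms unfolding Pall_def by blast
  then have "p \<in> Ck m k" using Psel_props by blast
  then have "p \<in> X" "col m p = k" unfolding Ck_def by auto
  then show "p \<in> X" "col m p \<in> {1..m}" "p \<in> Psel a m (col m p)" using k by auto
qed

lemma Pall_finite: "finite (Pall a m)"
  unfolding Pall_def using Psel_props by blast

lemma col_set: "{q\<in>Pall a m. col m q = k} \<subseteq> Psel a m k"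
  using Pall_mem by blast

lemma rank_le: "rank a m p \<le> Rn a m"
proof -
  have "rank a m p \<le> card (Psel a m (col m p))" unfolding rank_def
    using col_set[of a m "col m p"] Psel_props by (intro card_mono) auto
  then show ?thesis using Psel_props order_trans by blast
qed

lemma rank_mono:
  assumes "p \<in> Pall a m" "q \<in> Pall a m" "col m p = col m q" "p < q"
  shows "rank a m p < rank a m q"
  unfolding rank_def
proof (rule psubset_card_mono)
  show "finite {r\<in>Pall a m. col m r = col m q \<and> r \<le> q}" using Pall_finite by simp
  have "q \<in> {r\<in>Pall a m. col m r = col m q \<and> r \<le> q}" "q \<notin> {r\<in>Pall a m. col m r = col m p \<and> r \<le> p}"
    using assms by auto
  moreover have "{r\<in>Pall a m. col m r = col m p \<and> r \<le> p} \<subseteq> {r\<in>Pall a m. col m r = col m q \<and> r \<le> q}"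
    using assms by auto
  ultimately show "{r\<in>Pall a m. col m r = col m p \<and> r \<le> p} \<subset> {r\<in>Pall a m. col m r = col m q \<and> r \<le> q}"
    by blast
qed

lemma vv_range:
  assumes gm: "goodm F b m" and b: "0 < b" and p: "p \<in> Pall (b/2) m"
  shows "0 \<le> vv F (b/2) m p \<and> vv F (b/2) m p \<le> 1"
    "0 \<le> target F (b/2) m p - F p" "target F (b/2) m p - F p \<le> b/2"
proof -
  define a where "a = b/2"
  have a0: "a > 0" using b unfolding a_def by simp
  have m2: "m \<ge> 2" using gm unfolding goodm_def by simp
  have pX: "p \<in> X" and cp: "col m p \<in> {1..m}" using Pall_mem[OF p] by auto
  have p01: "p \<in> {0..1}" using pX X01 by auto
  have pI: "p \<in> Ik m (col m p)" using col_in_Ik[of m p] m2 p01 by auto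
  define r where "r = (real (col m p) - 1) / real m"
  have r01: "r \<in> {0..1}" using cp m2 unfolding r_def by (auto simp: field_simps)
  have e: "real (col m p)/real m - (real (col m p)-1)/real m = 1/real m" by (simp add: diff_divide_distrib)
  have "\<bar>r - p\<bar> \<le> 1 / real m" using pI e unfolding r_def Ik_def by auto
  then have Fd: "\<bar>F r - F p\<bar> \<le> a/4" using gm r01 p01 unfolding goodm_def a_def by auto
  have R: "real (Rn a m) \<le> a * real m / 6"
  proof -
    have "\<lfloor>a * real m / 6\<rfloor> \<ge> 0" using a0 by simp
    then have "real (Rn a m) = of_int \<lfloor>a * real m / 6\<rfloor>" unfolding Rn_def by simp
    then show ?thesis by linarith
  qed
  have rk: "3 / real m * real (rank a m p) \<le> a / 2"
  proof -
    have "real (rank a m p) \<le> a * real m / 6" using rank_le[of a m p] R by linarith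
    then have "3 / real m * real (rank a m p) \<le> 3 / real m * (a * real m / 6)"
      using m2 by (intro mult_left_mono) auto
    also have "\<dots> = a/2" using m2 by (simp add: field_simps)
    finally show ?thesis .
  qed
  have rk0: "0 \<le> 3 / real m * real (rank a m p)" by simp
  have "target F a m p - F p = (F r - F p) + a/4 + 3 / real m * real (rank a m p)"
    unfolding target_def r_def by simp
  moreover have "-(a/4) \<le> F r - F p" "F r - F p \<le> a/4" using Fd abs_le_iff by linarith+
  ultimately have t1: "0 \<le> target F a m p - F p" "target F a m p - F p \<le> a" using rk rk0 by linarith+
  then show "0 \<le> target F (b/2) m p - F p" "target F (b/2) m p - F p \<le> b/2" unfolding a_def by auto
  show "0 \<le> vv F (b/2) m p \<and> vv F (b/2) m p \<le> 1" unfolding vv_def a_def[symmetric]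
    using t1 a0 by (auto simp: field_simps)
qed

end



lemma floor_box:
  assumes "(m::real) > 0"
  shows "of_int \<lfloor>m * y\<rfloor> * (1/m) \<le> y \<and> y \<le> (of_int \<lfloor>m * y\<rfloor> + 1) * (1/m)"
proof -
  have "of_int \<lfloor>m * y\<rfloor> \<le> m * y" "m * y \<le> of_int \<lfloor>m * y\<rfloor> + 1" by linarith+
  then show ?thesis using assms by (auto simp: field_simps)
qed

context lowc
begin

lemma Ck_disj: "k \<noteq> k' \<Longrightarrow> Ck m k \<inter> Ck m k' = {}" unfolding Ck_def by auto

lemma Ck_empty: "k > m \<Longrightarrow> Ck m k = {}" unfolding Ck_def col_def by auto

lemma gr_le_Ck:
  assumes m1: "m \<ge> 1"
  shows "gr X m \<le> 2 * (\<Sum>k\<in>{1..m}. ecm m (Ck m k))"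
proof -
  define g where "g k = ecm m (Ck m k)" for k
  have g0: "0 \<le> g k" for k unfolding g_def by (rule ecm_nonneg)
  have "ecm m (X \<inter> Ik m k) \<le> g k + g (Suc k)" if k: "k \<in> {1..m}" for k
  proof -
    have "X \<inter> Ik m k \<subseteq> Ck m k \<union> Ck m (Suc k)"
    proof
      fix x assume x: "x \<in> X \<inter> Ik m k"
      then have "col m x = k \<or> col m x = k + 1" using col_of_Ik[OF m1] k by auto
      then show "x \<in> Ck m k \<union> Ck m (Suc k)" using x unfolding Ck_def by auto
    qed
    then have "ecm m (X \<inter> Ik m k) \<le> ecm m (Ck m k \<union> Ck m (Suc k))" by (rule ecm_mono)
    also have "\<dots> \<le> g k + g (Suc k)" unfolding g_def by (rule ecm_Un)
    finally show ?thesis .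
  qed
  then have "gr X m \<le> (\<Sum>k\<in>{1..m}. g k + g (Suc k))" unfolding gr_def by (intro sum_mono) auto
  also have "\<dots> = (\<Sum>k\<in>{1..m}. g k) + (\<Sum>k\<in>{1..m}. g (Suc k))" by (simp add: sum.distrib)
  also have "(\<Sum>k\<in>{1..m}. g (Suc k)) = (\<Sum>k\<in>{Suc 1..Suc m}. g k)"
    by (rule sum.shift_bounds_cl_Suc_ivl[symmetric])
  also have "\<dots> \<le> (\<Sum>k\<in>{1..Suc m}. g k)" by (intro sum_mono2) (auto simp: g0)
  also have "\<dots> = (\<Sum>k\<in>{1..m}. g k) + g (Suc m)" using m1 by (simp add: sum.cl_ivl_Suc)
  also have "g (Suc m) = 0" unfolding g_def using Ck_empty[of m "Suc m"] by (simp add: ecm_def)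
  finally show ?thesis unfolding g_def by simp
qed

lemma Psel_card_ge:
  assumes a: "0 < a" "a \<le> 1" and am: "12 \<le> a * real m"
  shows "a / 12 * ecm m (Ck m k) \<le> real (card (Psel a m k))"
proof (cases "finite (Ck m k) \<and> card (Ck m k) \<le> Rn a m")
  case True
  then have P: "Psel a m k = Ck m k" by (simp add: Psel_def)
  have "a / 12 * ecm m (Ck m k) \<le> 1 * ecm m (Ck m k)" using a ecm_nonneg by (intro mult_right_mono) auto
  also have "\<dots> \<le> real (card (Ck m k))" using True by (simp add: ecm_def)
  finally show ?thesis using P by simp
next
  case False
  then have c: "card (Psel a m k) = Rn a m" using Psel_props by blast
  have "\<lfloor>a * real m / 6\<rfloor> \<ge> 0" using a by simp
  then have R: "real (Rn a m) = of_int \<lfloor>a * real m / 6\<rfloor>" unfolding Rn_def by simp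
  have "a / 12 * ecm m (Ck m k) \<le> a / 12 * real m" using a ecm_le by (intro mult_left_mono) auto
  also have "\<dots> \<le> a * real m / 6 - 1" using am by simp
  also have "\<dots> \<le> real (Rn a m)" unfolding R by linarith
  finally show ?thesis using c by simp
qed

lemma count_stage:
  assumes gm: "goodm F b m" and b: "0 < b" "b \<le> 1"
    and hv: "\<forall>p\<in>Pall (b/2) m. h p = vv F (b/2) m p"
    and tl: "\<forall>x\<in>X. F x + b/2 * h x \<le> f x \<and> f x \<le> F x + b/2 * h x + 1/(4*real m)"
  shows "ereal (real m powr (s - \<epsilon>)) \<le> grid_count (1/real m) (graph_on X f)"
proof -
  define a where "a = b/2"
  define P where "P = Pall a m"
  have a0: "0 < a" "a \<le> 1" using b unfolding a_def by auto
  have m2: "m \<ge> 2" and am: "12 \<le> a * real m" and me: "48/b \<le> real m powr \<epsilon>"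
    and gs: "real m powr s \<le> gr X m"
    using gm unfolding goodm_def a_def by auto
  have mpos: "real m > 0" using m2 by simp
  have fp: "target F a m p \<le> f p \<and> f p \<le> target F a m p + 1/(4*real m)" if p: "p \<in> P" for p
  proof -
    have "b/2 * h p = target F a m p - F p" using hv p a0 unfolding P_def a_def vv_def by simp
    moreover have "p \<in> X" using Pall_mem p unfolding P_def by blast
    then have "F p + b/2 * h p \<le> f p \<and> f p \<le> F p + b/2 * h p + 1/(4*real m)" using tl by blast
    ultimately show ?thesis by linarith
  qed
  define sq where "sq p = (\<lfloor>real m * p\<rfloor>, \<lfloor>real m * f p\<rfloor>)" for p
  have sq_in: "sq p \<in> sqset (1/real m) (graph_on X f)" if "p \<in> X" for p
    unfolding sq_def sqset_mem
    using floor_box[OF mpos, of p] floor_box[OF mpos, of "f p"] that by auto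
  have neq: "sq p \<noteq> sq q" if pq: "p \<in> P" "q \<in> P" "p < q" for p q
  proof
    assume e: "sq p = sq q"
    then have fl1: "\<lfloor>real m * p\<rfloor> = \<lfloor>real m * q\<rfloor>" and fl2: "\<lfloor>real m * f p\<rfloor> = \<lfloor>real m * f q\<rfloor>"
      unfolding sq_def by auto
    have cc: "col m p = col m q" unfolding col_def using fl1 by simp
    have "rank a m p < rank a m q" using rank_mono[of p a m q] pq cc unfolding P_def by simp
    then have rk: "real (rank a m q) - real (rank a m p) \<ge> 1" by linarith
    have "target F a m q - target F a m p = 3 / real m * (real (rank a m q) - real (rank a m p))"
      unfolding target_def cc by (simp add: algebra_simps)
    also have "\<dots> \<ge> 3 / real m * 1" using rk mpos by (intro mult_left_mono) auto
    finally have tg: "target F a m q - target F a m p \<ge> 3 / real m" by simp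
    have "f q - f p \<ge> 3 / real m - 1/(4*real m)" using fp[OF pq(1)] fp[OF pq(2)] tg by linarith
    moreover have "3 / real m - 1/(4*real m) = (11/4) * (1 / real m)" using mpos by (simp add: field_simps)
    ultimately have d1: "real m * (f q - f p) \<ge> 11/4" using mpos by (simp add: field_simps)
    have "real m * f q < real m * f p + 1" using fl2 by linarith
    then show False using d1 by (simp add: algebra_simps)
  qed
  have inj: "inj_on sq P"
  proof (rule inj_onI)
    fix p q assume "p \<in> P" "q \<in> P" "sq p = sq q"
    then show "p = q" using neq by (metis linorder_neqE_linordered_idom)
  qed
  have fP: "finite P" unfolding P_def by (rule Pall_finite)
  have cardP: "card P = (\<Sum>k\<in>{1..m}. card (Psel a m k))" unfolding P_def Pall_def
  proof (rule card_UN_disjoint)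
    show "finite {1..m}" by simp
    show "\<forall>i\<in>{1..m}. finite (Psel a m i)" using Psel_props by blast
    show "\<forall>i\<in>{1..m}. \<forall>j\<in>{1..m}. i \<noteq> j \<longrightarrow> Psel a m i \<inter> Psel a m j = {}"
      using Psel_props Ck_disj by blast
  qed
  have "real m powr (s - \<epsilon>) = real m powr s / real m powr \<epsilon>" by (simp add: powr_diff)
  also have "\<dots> \<le> real m powr s * (a / 24)"
  proof -
    have mp: "real m powr \<epsilon> > 0" using mpos by simp
    have "1 \<le> (a/24) * real m powr \<epsilon>" using me b unfolding a_def by (simp add: field_simps)
    then show ?thesis using mp by (simp add: divide_le_eq algebra_simps)
  qed
  also have "\<dots> \<le> gr X m * (a/24)" using gs a0 by (intro mult_right_mono) auto
  also have "\<dots> \<le> 2 * (\<Sum>k\<in>{1..m}. ecm m (Ck m k)) * (a/24)" using gr_le_Ck[of m] m2 a0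
    by (intro mult_right_mono) auto
  also have "\<dots> = (\<Sum>k\<in>{1..m}. a / 12 * ecm m (Ck m k))" by (simp add: sum_distrib_left sum_distrib_right mult_ac)
  also have "\<dots> \<le> (\<Sum>k\<in>{1..m}. real (card (Psel a m k)))" using Psel_card_ge[OF a0 am] by (intro sum_mono) auto
  also have "\<dots> = real (card P)" using cardP by simp
  finally have le1: "real m powr (s - \<epsilon>) \<le> real (card P)" .
  show ?thesis
  proof (cases "finite (sqset (1/real m) (graph_on X f))")
    case False
    then show ?thesis unfolding grid_count_sqset ecard_def by simp
  next
    case True
    have "sq ` P \<subseteq> sqset (1/real m) (graph_on X f)" using sq_in Pall_mem unfolding P_def by blast
    then have "card (sq ` P) \<le> card (sqset (1/real m) (graph_on X f))" using True by (intro card_mono)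
    then have "card P \<le> card (sqset (1/real m) (graph_on X f))" using card_image[OF inj] by simp
    then show ?thesis using le1 True unfolding grid_count_sqset ecard_def by simp
  qed
qed

end



context lowc
begin

definition goodh :: "(real \<Rightarrow> real) \<Rightarrow> real \<Rightarrow> nat \<Rightarrow> (real \<Rightarrow> real) \<Rightarrow> bool" where
  "goodh F b m h \<longleftrightarrow> continuous_on UNIV h \<and> (\<forall>x. 0 \<le> h x \<and> h x \<le> 1) \<and>
     (\<forall>p\<in>Pall (b/2) m. h p = vv F (b/2) m p)"

lemma exists_goodm:
  assumes F: "continuous_on UNIV F" and b: "0 < b"
  shows "\<exists>m. goodm F b m"
proof -
  have "uniformly_continuous_on {0..1} F"
    by (rule compact_uniformly_continuous) (use continuous_on_subset[OF F] in auto)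
  moreover have "b/8 > 0" using b by simp
  ultimately obtain d where d: "d > 0" "\<forall>x\<in>{0..1}. \<forall>y\<in>{0..1}. dist y x < d \<longrightarrow> dist (F y) (F x) < b/8"
    unfolding uniformly_continuous_on_def by metis
  define n where "n = nat \<lceil>1/b\<rceil> + nat \<lceil>24/b\<rceil> + nat \<lceil>(48/b) powr (1/\<epsilon>)\<rceil> + nat \<lceil>1/d\<rceil> + 3"
  obtain m where m: "m \<ge> n" "m \<ge> 2" "real m powr s \<le> gr X m" using freq by blast
  have n1: "1/b \<le> real (nat \<lceil>1/b\<rceil>)" "24/b \<le> real (nat \<lceil>24/b\<rceil>)"
    "(48/b) powr (1/\<epsilon>) \<le> real (nat \<lceil>(48/b) powr (1/\<epsilon>)\<rceil>)" "1/d \<le> real (nat \<lceil>1/d\<rceil>)"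
    by (rule real_nat_ceiling_ge)+
  have rn: "real n \<le> real m" using m by simp
  have rn': "real n = real (nat \<lceil>1/b\<rceil>) + real (nat \<lceil>24/b\<rceil>) + real (nat \<lceil>(48/b) powr (1/\<epsilon>)\<rceil>) + real (nat \<lceil>1/d\<rceil>) + 3"
    unfolding n_def by simp
  have p1: "1/b < real m" using n1 rn rn' by linarith
  have p2: "24/b \<le> real m" using n1 rn rn' by linarith
  have p3: "(48/b) powr (1/\<epsilon>) \<le> real m" using n1 rn rn' by linarith
  have p4: "1/d < real m" using n1 rn rn' by linarith
  have "12 \<le> (b/2) * real m" using p2 b by (simp add: field_simps)
  moreover have "48/b \<le> real m powr \<epsilon>"
  proof -
    have "((48/b) powr (1/\<epsilon>)) powr \<epsilon> \<le> real m powr \<epsilon>" using p3 eps by (intro powr_mono2) auto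
    moreover have "((48/b) powr (1/\<epsilon>)) powr \<epsilon> = 48/b" using eps b by (simp add: powr_powr)
    ultimately show ?thesis by simp
  qed
  moreover have "\<forall>x\<in>{0..1}. \<forall>y\<in>{0..1}. \<bar>x - y\<bar> \<le> 1 / real m \<longrightarrow> \<bar>F x - F y\<bar> \<le> b/8"
  proof (intro ballI impI)
    fix x y :: real assume xy: "x \<in> {0..1}" "y \<in> {0..1}" "\<bar>x - y\<bar> \<le> 1 / real m"
    have "1 / real m < d" using p4 d(1) m(2) by (simp add: field_simps)
    then have "dist x y < d" using xy(3) by (simp add: dist_real_def)
    then have "dist (F x) (F y) < b/8" using d(2) xy by blast
    then show "\<bar>F x - F y\<bar> \<le> b/8" by (simp add: dist_real_def)
  qed
  ultimately have "goodm F b m" unfolding goodm_def using m p1 by auto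
  then show ?thesis by blast
qed

lemma exists_goodh:
  assumes gm: "goodm F b m" and b: "0 < b"
  shows "\<exists>h. goodh F b m h"
proof -
  have "\<exists>h. continuous_on UNIV h \<and> (\<forall>x. 0 \<le> h x \<and> h x \<le> 1) \<and> (\<forall>p\<in>Pall (b/2) m. h p = vv F (b/2) m p)"
    by (rule interp[OF Pall_finite]) (use vv_range(1)[OF gm b] in blast)
  then show ?thesis unfolding goodh_def .
qed

definition mch :: "(real \<Rightarrow> real) \<Rightarrow> real \<Rightarrow> nat" where "mch F b = (SOME m. goodm F b m)"
definition hch :: "(real \<Rightarrow> real) \<Rightarrow> real \<Rightarrow> (real \<Rightarrow> real)" where "hch F b = (SOME h. goodh F b (mch F b) h)"

lemma ch_good:
  assumes "continuous_on UNIV F" "0 < b"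
  shows "goodm F b (mch F b)" "goodh F b (mch F b) (hch F b)"
proof -
  show g: "goodm F b (mch F b)" unfolding mch_def using exists_goodm[OF assms] by (rule someI_ex)
  show "goodh F b (mch F b) (hch F b)" unfolding hch_def using exists_goodh[OF g assms(2)] by (rule someI_ex)
qed

primrec st :: "nat \<Rightarrow> (real \<Rightarrow> real) \<times> real" where
  "st 0 = (\<lambda>_. 0, 1)"
| "st (Suc j) = (\<lambda>x. fst (st j) x + snd (st j) / 2 * hch (fst (st j)) (snd (st j)) x,
                 min (snd (st j) / 2) (1 / real (mch (fst (st j)) (snd (st j)))) / 4)"

definition FF where "FF j = fst (st j)"
definition bb where "bb j = snd (st j)"
definition mm where "mm j = mch (FF j) (bb j)"
definition hh where "hh j = hch (FF j) (bb j)"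

lemma st_Suc: "FF (Suc j) = (\<lambda>x. FF j x + bb j / 2 * hh j x)"
  "bb (Suc j) = min (bb j / 2) (1 / real (mm j)) / 4"
  by (simp_all add: FF_def bb_def mm_def hh_def)

lemma inv: "continuous_on UNIV (FF j) \<and> 0 < bb j \<and> bb j \<le> (1/8)^j"
proof (induction j)
  case 0
  then show ?case by (simp add: FF_def bb_def)
next
  case (Suc j)
  then have g: "goodm (FF j) (bb j) (mm j)" "goodh (FF j) (bb j) (mm j) (hh j)"
    using ch_good unfolding mm_def hh_def by auto
  have m2: "mm j \<ge> 2" using g(1) unfolding goodm_def by simp
  have "continuous_on UNIV (hh j)" using g(2) unfolding goodh_def by simp
  then have "continuous_on UNIV (FF (Suc j))" unfolding st_Suc using Suc by (intro continuous_intros) auto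
  moreover have "0 < bb (Suc j)" unfolding st_Suc using Suc m2 by simp
  moreover have "bb (Suc j) \<le> (1/8)^(Suc j)"
  proof -
    have "bb (Suc j) \<le> bb j / 8" unfolding st_Suc by simp
    then show ?thesis using Suc by simp
  qed
  ultimately show ?case by blast
qed

lemma good_j: "goodm (FF j) (bb j) (mm j)" "goodh (FF j) (bb j) (mm j) (hh j)"
  using ch_good inv unfolding mm_def hh_def by auto

end



context lowc
begin

lemma hh_range: "0 \<le> hh j x \<and> hh j x \<le> 1"
  using good_j(2)[of j] unfolding goodh_def by blast

lemma bb_pos: "0 < bb j" using inv by blast
lemma bb_le: "bb j \<le> (1/8)^j" using inv by blast
lemma bb_Suc: "bb (Suc j) \<le> bb j / 8" "bb (Suc j) \<le> 1 / (4 * real (mm j))"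
  unfolding st_Suc by auto

lemma bb_shift: "bb (i + j) \<le> bb j * (1/8)^i"
proof (induction i)
  case 0 then show ?case by simp
next
  case (Suc i)
  have "bb (Suc i + j) \<le> bb (i + j) / 8" using bb_Suc(1)[of "i+j"] by simp
  also have "\<dots> \<le> bb j * (1/8)^i / 8" using Suc by simp
  finally show ?case by simp
qed

definition trm :: "nat \<Rightarrow> real \<Rightarrow> real" where "trm i x = bb i / 2 * hh i x"

lemma trm_bounds: "0 \<le> trm i x" "trm i x \<le> bb i / 2"
proof -
  have "0 \<le> bb i" using bb_pos[of i] by simp
  then show "0 \<le> trm i x" "trm i x \<le> bb i / 2" unfolding trm_def using hh_range[of i x]
    by (auto intro: mult_nonneg_nonneg mult_left_le)
qed

lemma FF_sum: "FF j x = (\<Sum>i<j. trm i x)"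
  by (induction j) (simp_all add: FF_def[symmetric] st_Suc trm_def, simp add: FF_def)

lemma trm_summable: "summable (\<lambda>i. trm (i + j) x)"
proof (rule summable_comparison_test)
  show "\<exists>N. \<forall>n\<ge>N. norm (trm (n + j) x) \<le> bb j * (1/8)^n"
  proof (intro exI[of _ 0] allI impI)
    fix n :: nat
    have "norm (trm (n + j) x) = trm (n + j) x" using trm_bounds by simp
    also have "\<dots> \<le> bb (n + j) / 2" by (rule trm_bounds)
    also have "\<dots> \<le> bb (n + j)" using bb_pos[of "n+j"] by simp
    also have "\<dots> \<le> bb j * (1/8)^n" by (rule bb_shift)
    finally show "norm (trm (n + j) x) \<le> bb j * (1/8)^n" .
  qed
  show "summable (\<lambda>n. bb j * (1/8::real)^n)" by (intro summable_mult summable_geometric) simp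
qed

definition ff :: "real \<Rightarrow> real" where "ff x = (\<Sum>i. trm i x)"

lemma tail: "FF j x \<le> ff x \<and> ff x \<le> FF j x + bb j"
proof -
  have sm: "summable (\<lambda>i. trm i x)" using trm_summable[of 0 x] by simp
  have sp: "ff x = (\<Sum>i. trm (i + j) x) + (\<Sum>i<j. trm i x)"
    unfolding ff_def by (rule suminf_split_initial_segment[OF sm])
  have t0: "0 \<le> (\<Sum>i. trm (i + j) x)" using trm_summable trm_bounds by (intro suminf_nonneg) auto
  have "(\<Sum>i. trm (i + j) x) \<le> (\<Sum>i. bb j / 2 * (1/8::real)^i)"
  proof (rule suminf_le)
    show "trm (n + j) x \<le> bb j / 2 * (1/8)^n" for n
    proof -
      have "trm (n + j) x \<le> bb (n + j) / 2" by (rule trm_bounds)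
      also have "\<dots> \<le> bb j * (1/8)^n / 2" using bb_shift[of n j] by simp
      finally show ?thesis by simp
    qed
    show "summable (\<lambda>i. trm (i + j) x)" by (rule trm_summable)
    show "summable (\<lambda>i. bb j / 2 * (1/8::real)^i)" by (intro summable_mult summable_geometric) simp
  qed
  also have "\<dots> = bb j / 2 * (8/7)"
    by (subst suminf_mult) (auto simp: suminf_geometric)
  also have "\<dots> \<le> bb j" using bb_pos[of j] by simp
  finally have "(\<Sum>i. trm (i + j) x) \<le> bb j" .
  then show ?thesis using sp t0 FF_sum[of j x] by linarith
qed

lemma ff_uc: "uniformly_continuous_on X ff"
  unfolding uniformly_continuous_on_def
proof (intro allI impI)
  fix e :: real assume e: "e > 0"
  obtain j where j: "(1/8::real)^j < e/3" using real_arch_pow_inv[of "e/3" "1/8"] e by auto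
  have "continuous_on {0..1} (FF j)" using inv continuous_on_subset by blast
  then have uc: "uniformly_continuous_on {0..1} (FF j)" using compact_uniformly_continuous compact_Icc by blast
  have e3: "e/3 > 0" using e by simp
  have "\<exists>d>0. \<forall>x\<in>{0..1}. \<forall>x'\<in>{0..1}. dist x' x < d \<longrightarrow> dist (FF j x') (FF j x) < e/3"
    using uc e3 unfolding uniformly_continuous_on_def by blast
  then obtain d where d: "d > 0" "\<forall>x\<in>{0..1}. \<forall>x'\<in>{0..1}. dist x' x < d \<longrightarrow> dist (FF j x') (FF j x) < e/3"
    by blast
  show "\<exists>d>0. \<forall>x\<in>X. \<forall>x'\<in>X. dist x' x < d \<longrightarrow> dist (ff x') (ff x) < e"
  proof (intro exI[of _ d] conjI ballI impI d(1))
    fix x x' assume xx: "x \<in> X" "x' \<in> X" "dist x' x < d"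
    have "dist (FF j x') (FF j x) < e/3" using d(2) xx X01 by auto
    then have a: "-(e/3) < FF j x' - FF j x" "FF j x' - FF j x < e/3" unfolding dist_real_def abs_less_iff by auto
    have "bb j < e/3" using bb_le[of j] j by linarith
    then have "-e < ff x' - ff x \<and> ff x' - ff x < e" using a tail[of j x] tail[of j x'] by linarith
    then show "dist (ff x') (ff x) < e" unfolding dist_real_def abs_less_iff by auto
  qed
qed

lemma stage_count: "ereal (real (mm j) powr (s - \<epsilon>)) \<le> grid_count (1/real (mm j)) (graph_on X ff)"
proof (rule count_stage[OF good_j(1)])
  show "0 < bb j" by (rule bb_pos)
  have "(1/8::real)^j \<le> 1" by (rule power_le_one) auto
  then show "bb j \<le> 1" using bb_le[of j] by linarith
  show "\<forall>p\<in>Pall (bb j / 2) (mm j). hh j p = vv (FF j) (bb j / 2) (mm j) p"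
    using good_j(2)[of j] unfolding goodh_def by blast
  show "\<forall>x\<in>X. FF j x + bb j / 2 * hh j x \<le> ff x \<and> ff x \<le> FF j x + bb j / 2 * hh j x + 1 / (4 * real (mm j))"
  proof
    fix x
    have "FF (Suc j) x \<le> ff x \<and> ff x \<le> FF (Suc j) x + bb (Suc j)" by (rule tail)
    moreover have "FF (Suc j) x = FF j x + bb j / 2 * hh j x" by (simp add: st_Suc)
    ultimately show "FF j x + bb j / 2 * hh j x \<le> ff x \<and> ff x \<le> FF j x + bb j / 2 * hh j x + 1 / (4 * real (mm j))"
      using bb_Suc(2)[of j] by linarith
  qed
qed

lemma lower_main: "ereal (s - \<epsilon>) \<le> upper_box_dim (graph_on X ff)"
  unfolding upper_box_dim_def
proof (rule Limsup_greatest)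
  fix P assume "eventually P (at_right (0::real))"
  then obtain c where c: "c > 0" "\<And>y. y > 0 \<Longrightarrow> y < c \<Longrightarrow> P y"
    unfolding eventually_at_right_field by auto
  obtain j where j: "(1/8::real)^j < c" using real_arch_pow_inv[of c "1/8"] c by auto
  define m where "m = mm j"
  have gm: "goodm (FF j) (bb j) m" using good_j unfolding m_def by simp
  have m2: "m \<ge> 2" and mb: "1 / bb j < real m" using gm unfolding goodm_def by auto
  have "1 / real m < bb j" using mb bb_pos[of j] m2 by (simp add: field_simps)
  then have dc: "1 / real m < c" using bb_le[of j] j by linarith
  have Pd: "P (1 / real m)" using c(2)[OF _ dc] m2 by simp
  have lm: "ln (real m) > 0" using m2 by simp
  have nl: "- ln (1 / real m) = ln (real m)" using m2 by (simp add: ln_div)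
  have cnt: "ereal (real m powr (s - \<epsilon>)) \<le> grid_count (1/real m) (graph_on X ff)"
    using stage_count unfolding m_def by simp
  have val: "ereal (s - \<epsilon>) \<le> eln (grid_count (1/real m) (graph_on X ff)) / ereal (- ln (1/real m))"
  proof (cases "grid_count (1/real m) (graph_on X ff)")
    case (real N)
    have Np: "N \<ge> real m powr (s - \<epsilon>)" using cnt real by simp
    have pp: "real m powr (s - \<epsilon>) > 0" using m2 by simp
    then have N0: "N > 0" using Np by linarith
    have "ln (real m powr (s - \<epsilon>)) \<le> ln N" using Np pp by (intro ln_mono) auto
    then have "(s - \<epsilon>) * ln (real m) \<le> ln N" using m2 by (simp add: ln_powr)
    then have "s - \<epsilon> \<le> ln N / ln (real m)" using lm by (simp add: le_divide_eq)
    then show ?thesis unfolding real nl using N0 lm by (simp add: ratio_pos)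
  next
    case PInf
    then show ?thesis unfolding nl using lm by (simp add: eln_def)
  next
    case MInf
    then show ?thesis using cnt by simp
  qed
  also have "\<dots> \<le> (SUP x\<in>Collect P. eln (grid_count x (graph_on X ff)) / ereal (- ln x))"
    using Pd by (intro SUP_upper) auto
  finally show "ereal (s - \<epsilon>) \<le> (SUP x\<in>Collect P. eln (grid_count x (graph_on X ff)) / ereal (- ln x))" .
qed

end



lemma empty_dim: "upper_box_dim {} = -\<infinity>"
proof -
  have "upper_box_dim {} \<le> -\<infinity>" unfolding upper_box_dim_def
  proof (rule Limsup_bounded)
    show "\<forall>\<^sub>F \<delta> in at_right 0. eln (grid_count \<delta> {}) / ereal (- ln \<delta>) \<le> -\<infinity>"
      unfolding eventually_at_right_field
    proof (intro exI[of _ 1] conjI allI impI)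
      fix \<delta> :: real assume d: "0 < \<delta>" "\<delta> < 1"
      have "- ln \<delta> > 0" using d by simp
      moreover have "grid_count \<delta> {} = ereal 0" by (simp add: grid_count_def ecard_def)
      ultimately show "eln (grid_count \<delta> {}) / ereal (- ln \<delta>) \<le> -\<infinity>" by (simp add: ratio_zero)
    qed simp
  qed
  then show ?thesis by simp
qed

theorem theorem1:
  fixes X :: "real set"
  assumes "X \<subseteq> {0..1}"
  shows "upper_graph_box_dim X =
         Limsup sequentially (\<lambda>m. eln (g_count X m) / ereal (ln (real m)))"
    (is "?G = ?L")
proof (rule antisym)
  show "?G \<le> ?L" unfolding upper_graph_box_dim_def
  proof (rule SUP_least)
    fix f :: "real \<Rightarrow> real" assume f: "f \<in> {f. uniformly_continuous_on X f}"
    show "upper_box_dim (graph_on X f) \<le> ?L"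
    proof (cases "X = {}")
      case True
      then have "graph_on X f = {}" by (simp add: graph_on_def)
      then show ?thesis by (simp add: empty_dim)
    next
      case False
      then show ?thesis using upper_dim[OF assms False] f by simp
    qed
  qed
  show "?L \<le> ?G"
  proof (rule dense_le)
    fix t assume t: "t < ?L"
    show "t \<le> ?G"
    proof (cases t)
      case MInf then show ?thesis by simp
    next
      case PInf then show ?thesis using t by simp
    next
      case (real t0)
      obtain s' where s': "t < s'" "s' < ?L" using dense[OF t] by blast
      then obtain s where s: "s' = ereal s" using real by (cases s') auto
      have ts: "t0 < s" using s' s real by simp
      have sL: "ereal s < ?L" using s' s by simp
      have freq: "\<forall>n. \<exists>m\<ge>n. m \<ge> 2 \<and> real m powr s \<le> gr X m"
      proof (rule ccontr)
        assume "\<not> ?thesis"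
        then obtain n where n: "\<And>m. m \<ge> n \<Longrightarrow> m \<ge> 2 \<Longrightarrow> gr X m < real m powr s" by (auto simp: not_le) (meson not_le)
        have "eventually (\<lambda>m. eln (g_count X m) / ereal (ln (real m)) \<le> ereal s) sequentially"
          unfolding eventually_sequentially
        proof (intro exI[of _ "max n 2"] allI impI)
          fix m assume m: "max n 2 \<le> m"
          have lm: "ln (real m) > 0" using m by simp
          have g: "gr X m < real m powr s" using n m by simp
          show "eln (g_count X m) / ereal (ln (real m)) \<le> ereal s"
          proof (cases "gr X m = 0")
            case True then show ?thesis unfolding g_count_gr using lm by (simp add: ratio_zero)
          next
            case False
            then have gp: "gr X m > 0" using gr_nonneg[of X m] by simp
            have pp: "real m powr s > 0" using m by simp
            have "ln (gr X m) < ln (real m powr s)" using g gp pp by (simp only: ln_less_cancel_iff)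
            also have "\<dots> = s * ln (real m)" using m by (simp add: ln_powr)
            finally have "ln (gr X m) / ln (real m) \<le> s" using lm by (simp add: divide_le_eq)
            then show ?thesis unfolding g_count_gr using gp lm by (simp add: ratio_pos)
          qed
        qed
        then have "?L \<le> ereal s" by (rule Limsup_bounded)
        then show False using sL by simp
      qed
      interpret lowc X s "s - t0" using assms ts freq by unfold_locales auto
      have "ereal t0 \<le> upper_box_dim (graph_on X ff)" using lower_main by simp
      also have "\<dots> \<le> ?G" unfolding upper_graph_box_dim_def using ff_uc by (intro SUP_upper) auto
      finally show ?thesis using real by simp
    qed
  qed
qed


end
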